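(* For any Lip-von Neumann algebras $(M_1,L_1)$, $(M_2,L_2)$, $(M_3,L_3)$, $$\mathrm{dist}_{qGH^*}(M_1,M_3)\le \mathrm{dist}_{qGH^*}(M_1,M_2)+\mathrm{dist}_{qGH^*}(M_2,M_3).$$
   Context: A Lip-von Neumann algebra (LvNA) is a pair $(M,L_M)$ where $M$ is a von Neumann algebra and $L_M$ is a norm on $M$ (everywhere finite) inducing the $w^*$-topology on bounded subsets of $M$ (equivalently, the closed unit ball $M_1=\{x\in M:\|x\|\le 1\}$ is compact in the $L_M$-topology). $L_M$ is extended to $\mathcal M_2(M)$ ($2\times2$ matrices over $M$) by $L_M((a_{ij}))=\max_{i,j}L_M(a_{ij})$. For LvNAs $(M,L_M)$, $(N,L_N)$, $\mathcal L(M,N)$ is the set of seminorms $L$ on $M\oplus N$ with $L(x,0)=L_M(x)$ and $L(0,y)=L_N(y)$ for all $x\in M,y\in N$; each such $L$ is extended to $\mathcal M_2(M)\oplus\mathcal M_2(N)\cong\mathcal M_2(M\oplus N)$ by entrywise maximum. $X_M=\{x\in\mathcal M_2(M): x\ge 0,\ \|x\|\le 1\}$, and similarly $X_N$. For $L\in\mathcal L(M,N)$, $\mathrm{dist}^L_H(X_M,X_N)=\max\big(\sup_{x\in X_M}\inf_{y\in X_N}L(x,-y),\ \sup_{y\in X_N}\inf_{x\in X_M}L(x,-y)\big)$, and the dual quantum Gromov–Hausdorff distance is $\mathrm{dist}_{qGH^*}(M,N)=\inf_{L\in\mathcal L(M,N)}\mathrm{dist}^L_H(X_M,X_N)$. 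*)

theory Defs
  imports Complex_Main "HOL-Library.Extended_Real"
begin

class hs_hilbert = ab_group_add +
  fixes hs_scale :: "complex \<Rightarrow> 'a \<Rightarrow> 'a"
    and hs_inner :: "'a \<Rightarrow> 'a \<Rightarrow> complex"
  assumes hs_scale_add_right: "hs_scale a (x + y) = hs_scale a x + hs_scale a y"
    and hs_scale_add_left: "hs_scale (a + b) x = hs_scale a x + hs_scale b x"
    and hs_scale_scale: "hs_scale a (hs_scale b x) = hs_scale (a * b) x"
    and hs_scale_one: "hs_scale 1 x = x"
    and hs_inner_add_left: "hs_inner (x + y) z = hs_inner x z + hs_inner y z"
    and hs_inner_scale_left: "hs_inner (hs_scale c x) y = c * hs_inner x y"
    and hs_inner_commute: "hs_inner y x = cnj (hs_inner x y)"
    and hs_inner_nonneg: "Im (hs_inner x x) = 0 \<and> Re (hs_inner x x) \<ge> 0"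
    and hs_inner_definite: "hs_inner x x = 0 \<Longrightarrow> x = 0"
    and hs_complete:
      "(\<forall>e>0. \<exists>N. \<forall>m\<ge>N. \<forall>n\<ge>N. sqrt (Re (hs_inner ((X::nat \<Rightarrow> 'a) m - X n) (X m - X n))) < e)
        \<Longrightarrow> (\<exists>l. \<forall>e>0. \<exists>N. \<forall>n\<ge>N. sqrt (Re (hs_inner (X n - l) (X n - l))) < e)"

definition hs_norm :: "'a::hs_hilbert \<Rightarrow> real" where
  "hs_norm x = sqrt (Re (hs_inner x x))"

definition op_add :: "('a::hs_hilbert \<Rightarrow> 'a) \<Rightarrow> ('a \<Rightarrow> 'a) \<Rightarrow> ('a \<Rightarrow> 'a)" where
  "op_add A B = (\<lambda>\<xi>. A \<xi> + B \<xi>)"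

definition op_diff :: "('a::hs_hilbert \<Rightarrow> 'a) \<Rightarrow> ('a \<Rightarrow> 'a) \<Rightarrow> ('a \<Rightarrow> 'a)" where
  "op_diff A B = (\<lambda>\<xi>. A \<xi> - B \<xi>)"

definition op_neg :: "('a::hs_hilbert \<Rightarrow> 'a) \<Rightarrow> ('a \<Rightarrow> 'a)" where
  "op_neg A = (\<lambda>\<xi>. - A \<xi>)"

definition op_scale :: "complex \<Rightarrow> ('a::hs_hilbert \<Rightarrow> 'a) \<Rightarrow> ('a \<Rightarrow> 'a)" where
  "op_scale c A = (\<lambda>\<xi>. hs_scale c (A \<xi>))"

definition op_zero :: "'a::hs_hilbert \<Rightarrow> 'a" where
  "op_zero = (\<lambda>\<xi>. 0)"

definition bounded_op :: "('a::hs_hilbert \<Rightarrow> 'a) \<Rightarrow> bool" where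
  "bounded_op A \<longleftrightarrow>
     (\<forall>x y. A (x + y) = A x + A y) \<and> (\<forall>c x. A (hs_scale c x) = hs_scale c (A x)) \<and>
     (\<exists>K. \<forall>x. hs_norm (A x) \<le> K * hs_norm x)"

definition commutant :: "('a::hs_hilbert \<Rightarrow> 'a) set \<Rightarrow> ('a \<Rightarrow> 'a) set" where
  "commutant S = {B. bounded_op B \<and> (\<forall>A\<in>S. B \<circ> A = A \<circ> B)}"

definition von_neumann_algebra :: "('a::hs_hilbert \<Rightarrow> 'a) set \<Rightarrow> bool" where
  "von_neumann_algebra M \<longleftrightarrow>
     (\<forall>A\<in>M. bounded_op A) \<and>
     (\<forall>A\<in>M. \<exists>B\<in>M. \<forall>x y. hs_inner (A x) y = hs_inner x (B y)) \<and>
     M = commutant (commutant M)"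

definition op_bounded_set :: "('a::hs_hilbert \<Rightarrow> 'a) set \<Rightarrow> bool" where
  "op_bounded_set S \<longleftrightarrow> (\<exists>r. \<forall>A\<in>S. \<forall>\<xi>. hs_norm (A \<xi>) \<le> r * hs_norm \<xi>)"

text \<open>Normal (sigma-weakly continuous) functionals
  A \<mapsto> \<Sum>n. <A \<xi>_n, \<eta>_n> with square-summable sequences.\<close>
definition sq_summable :: "(nat \<Rightarrow> 'a::hs_hilbert) \<Rightarrow> bool" where
  "sq_summable \<xi> \<longleftrightarrow> summable (\<lambda>n. (hs_norm (\<xi> n))\<^sup>2)"

definition normal_fun :: "(nat \<Rightarrow> 'a::hs_hilbert) \<Rightarrow> (nat \<Rightarrow> 'a) \<Rightarrow> ('a \<Rightarrow> 'a) \<Rightarrow> complex" where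
  "normal_fun \<xi> \<eta> A = (\<Sum>n. hs_inner (A (\<xi> n)) (\<eta> n))"

definition wstar_open_in :: "('a::hs_hilbert \<Rightarrow> 'a) set \<Rightarrow> ('a \<Rightarrow> 'a) set \<Rightarrow> bool" where
  "wstar_open_in S U \<longleftrightarrow> U \<subseteq> S \<and>
     (\<forall>A\<in>U. \<exists>F e. finite F \<and> e > 0 \<and>
        (\<forall>(\<xi>, \<eta>)\<in>F. sq_summable \<xi> \<and> sq_summable \<eta>) \<and>
        (\<forall>B\<in>S. (\<forall>(\<xi>, \<eta>)\<in>F. cmod (normal_fun \<xi> \<eta> (op_diff B A)) < e) \<longrightarrow> B \<in> U))"

definition norm_open_in :: "(('a::hs_hilbert \<Rightarrow> 'a) \<Rightarrow> real) \<Rightarrow> ('a \<Rightarrow> 'a) set \<Rightarrow> ('a \<Rightarrow> 'a) set \<Rightarrow> bool" where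
  "norm_open_in L S U \<longleftrightarrow> U \<subseteq> S \<and>
     (\<forall>A\<in>U. \<exists>e>0. \<forall>B\<in>S. L (op_diff B A) < e \<longrightarrow> B \<in> U)"

definition is_norm_on :: "('a::hs_hilbert \<Rightarrow> 'a) set \<Rightarrow> (('a \<Rightarrow> 'a) \<Rightarrow> real) \<Rightarrow> bool" where
  "is_norm_on M L \<longleftrightarrow>
     (\<forall>A\<in>M. \<forall>B\<in>M. L (op_add A B) \<le> L A + L B) \<and>
     (\<forall>c. \<forall>A\<in>M. L (op_scale c A) = cmod c * L A) \<and>
     (\<forall>A\<in>M. L A = 0 \<longleftrightarrow> A = op_zero)"

definition LvNA :: "('a::hs_hilbert \<Rightarrow> 'a) set \<Rightarrow> (('a \<Rightarrow> 'a) \<Rightarrow> real) \<Rightarrow> bool" where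
  "LvNA M L \<longleftrightarrow> von_neumann_algebra M \<and> is_norm_on M L \<and>
     (\<forall>S. S \<subseteq> M \<and> op_bounded_set S \<longrightarrow>
        (\<forall>U. norm_open_in L S U \<longleftrightarrow> wstar_open_in S U))"

type_synonym 'a mat2 = "bool \<Rightarrow> bool \<Rightarrow> ('a \<Rightarrow> 'a)"

definition mat_pos :: "'a::hs_hilbert mat2 \<Rightarrow> bool" where
  "mat_pos x \<longleftrightarrow> (\<forall>\<xi>::bool \<Rightarrow> 'a.
     Im (\<Sum>i\<in>UNIV. \<Sum>j\<in>UNIV. hs_inner (x i j (\<xi> j)) (\<xi> i)) = 0 \<and>
     Re (\<Sum>i\<in>UNIV. \<Sum>j\<in>UNIV. hs_inner (x i j (\<xi> j)) (\<xi> i)) \<ge> 0)"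

definition mat_contr :: "'a::hs_hilbert mat2 \<Rightarrow> bool" where
  "mat_contr x \<longleftrightarrow> (\<forall>\<xi>::bool \<Rightarrow> 'a.
     (\<Sum>i\<in>UNIV. (hs_norm (\<Sum>j\<in>UNIV. x i j (\<xi> j)))\<^sup>2) \<le> (\<Sum>j\<in>UNIV. (hs_norm (\<xi> j))\<^sup>2))"

definition XM :: "('a::hs_hilbert \<Rightarrow> 'a) set \<Rightarrow> 'a mat2 set" where
  "XM M = {x. (\<forall>i j. x i j \<in> M) \<and> mat_pos x \<and> mat_contr x}"

definition mat_neg :: "'a::hs_hilbert mat2 \<Rightarrow> 'a mat2" where
  "mat_neg y = (\<lambda>i j. op_neg (y i j))"

definition Lset :: "('a::hs_hilbert \<Rightarrow> 'a) set \<Rightarrow> (('a \<Rightarrow> 'a) \<Rightarrow> real)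
    \<Rightarrow> ('b::hs_hilbert \<Rightarrow> 'b) set \<Rightarrow> (('b \<Rightarrow> 'b) \<Rightarrow> real)
    \<Rightarrow> ((('a \<Rightarrow> 'a) \<times> ('b \<Rightarrow> 'b)) \<Rightarrow> real) set" where
  "Lset M LM N LN = {L.
     (\<forall>p\<in>M \<times> N. \<forall>q\<in>M \<times> N.
        L (op_add (fst p) (fst q), op_add (snd p) (snd q)) \<le> L p + L q) \<and>
     (\<forall>c. \<forall>p\<in>M \<times> N. L (op_scale c (fst p), op_scale c (snd p)) = cmod c * L p) \<and>
     (\<forall>x\<in>M. L (x, op_zero) = LM x) \<and>
     (\<forall>y\<in>N. L (op_zero, y) = LN y)}"

definition Lmat :: "((('a::hs_hilbert \<Rightarrow> 'a) \<times> ('b::hs_hilbert \<Rightarrow> 'b)) \<Rightarrow> real)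
    \<Rightarrow> 'a mat2 \<Rightarrow> 'b mat2 \<Rightarrow> real" where
  "Lmat L x y = Max {L (x i j, y i j) | i j. True}"

definition distH :: "((('a::hs_hilbert \<Rightarrow> 'a) \<times> ('b::hs_hilbert \<Rightarrow> 'b)) \<Rightarrow> real)
    \<Rightarrow> ('a \<Rightarrow> 'a) set \<Rightarrow> ('b \<Rightarrow> 'b) set \<Rightarrow> ereal" where
  "distH L M N = max
     (SUP x\<in>XM M. INF y\<in>XM N. ereal (Lmat L x (mat_neg y)))
     (SUP y\<in>XM N. INF x\<in>XM M. ereal (Lmat L x (mat_neg y)))"

definition dist_qGH :: "('a::hs_hilbert \<Rightarrow> 'a) set \<Rightarrow> (('a \<Rightarrow> 'a) \<Rightarrow> real)
    \<Rightarrow> ('b::hs_hilbert \<Rightarrow> 'b) set \<Rightarrow> (('b \<Rightarrow> 'b) \<Rightarrow> real) \<Rightarrow> ereal" where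
  "dist_qGH M LM N LN = (INF L\<in>Lset M LM N LN. distH L M N)"

end

theory Submission
  imports Defs
begin


lemma hs_scale_zero_right[simp]: "hs_scale c (0::'a::hs_hilbert) = 0"
  using hs_scale_add_right[of c "0::'a" 0] by simp

lemma hs_scale_zero_left[simp]: "hs_scale 0 (x::'a::hs_hilbert) = 0"
  using hs_scale_add_left[of 0 0 x] by simp

lemma hs_scale_minus_right: "hs_scale c (- (x::'a::hs_hilbert)) = - hs_scale c x"
  using hs_scale_add_right[of c x "-x"] by (simp add: eq_neg_iff_add_eq_0 add.commute)

lemma hs_scale_minus_one: "hs_scale (-1) (x::'a::hs_hilbert) = - x"
  using hs_scale_add_left[of 1 "-1" x] by (simp add: hs_scale_one eq_neg_iff_add_eq_0 add.commute)

lemma hs_inner_zero_left[simp]: "hs_inner (0::'a::hs_hilbert) y = 0"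
  using hs_inner_add_left[of "0::'a" 0 y] by simp

lemma hs_inner_minus_left: "hs_inner (- (x::'a::hs_hilbert)) y = - hs_inner x y"
  using hs_inner_add_left[of x "-x" y] by (simp add: eq_neg_iff_add_eq_0 add.commute)

lemma hs_inner_diff_left: "hs_inner ((x::'a::hs_hilbert) - z) y = hs_inner x y - hs_inner z y"
  using hs_inner_add_left[of x "-z" y] hs_inner_minus_left[of z y] by simp

lemma hs_inner_add_right: "hs_inner (x::'a::hs_hilbert) (y + z) = hs_inner x y + hs_inner x z"
proof -
  have "hs_inner x (y+z) = cnj (hs_inner (y+z) x)" by (rule hs_inner_commute)
  moreover have "hs_inner x y = cnj (hs_inner y x)" by (rule hs_inner_commute)
  moreover have "hs_inner x z = cnj (hs_inner z x)" by (rule hs_inner_commute)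
  ultimately show ?thesis by (simp add: hs_inner_add_left)
qed

lemma hs_inner_diff_right: "hs_inner (x::'a::hs_hilbert) (y - z) = hs_inner x y - hs_inner x z"
proof -
  have "hs_inner x (y-z) = cnj (hs_inner (y-z) x)" by (rule hs_inner_commute)
  moreover have "hs_inner x y = cnj (hs_inner y x)" by (rule hs_inner_commute)
  moreover have "hs_inner x z = cnj (hs_inner z x)" by (rule hs_inner_commute)
  ultimately show ?thesis by (simp add: hs_inner_diff_left)
qed

lemma hs_inner_scale_right: "hs_inner (x::'a::hs_hilbert) (hs_scale c y) = cnj c * hs_inner x y"
proof -
  have "hs_inner x (hs_scale c y) = cnj (hs_inner (hs_scale c y) x)" by (rule hs_inner_commute)
  moreover have "hs_inner x y = cnj (hs_inner y x)" by (rule hs_inner_commute)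
  ultimately show ?thesis by (simp add: hs_inner_scale_left)
qed

lemma Re_inner_sym: "Re (hs_inner (x::'a::hs_hilbert) y) = Re (hs_inner y x)"
proof -
  have "hs_inner x y = cnj (hs_inner y x)" by (rule hs_inner_commute)
  then show ?thesis by simp
qed

lemma hs_norm_sq: "(hs_norm (x::'a::hs_hilbert))\<^sup>2 = Re (hs_inner x x)"
  unfolding hs_norm_def by (meson hs_inner_nonneg real_sqrt_pow2)

lemma hs_norm_nonneg: "hs_norm (x::'a::hs_hilbert) \<ge> 0"
  unfolding hs_norm_def using hs_inner_nonneg[of x] by simp

lemma parallelogram_le:
  "(hs_norm ((a::'a::hs_hilbert) + b))\<^sup>2 \<le> 2 * (hs_norm a)\<^sup>2 + 2 * (hs_norm b)\<^sup>2"
proof -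
  have e1: "Re (hs_inner (a+b) (a+b)) = Re (hs_inner a a) + Re (hs_inner a b) + Re (hs_inner b a) + Re (hs_inner b b)"
    by (simp add: hs_inner_add_left hs_inner_add_right)
  have e2: "Re (hs_inner (a-b) (a-b)) = Re (hs_inner a a) - Re (hs_inner a b) - Re (hs_inner b a) + Re (hs_inner b b)"
    by (simp add: hs_inner_diff_left hs_inner_diff_right)
  have "Re (hs_inner (a-b) (a-b)) \<ge> 0" using hs_inner_nonneg by blast
  then show ?thesis unfolding hs_norm_sq using e1 e2 by linarith
qed

lemma hs_norm_scale: "hs_norm (hs_scale c (x::'a::hs_hilbert)) = cmod c * hs_norm x"
proof -
  have "hs_inner (hs_scale c x) (hs_scale c x) = c * cnj c * hs_inner x x"
    by (simp add: hs_inner_scale_left hs_inner_scale_right)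
  also have "c * cnj c = complex_of_real ((cmod c)\<^sup>2)" by (simp add: complex_norm_square[symmetric])
  finally have "Re (hs_inner (hs_scale c x) (hs_scale c x)) = (cmod c)\<^sup>2 * Re (hs_inner x x)"
    by simp
  then show ?thesis unfolding hs_norm_def by (simp add: real_sqrt_mult)
qed


lemma bounded_op_zero: "bounded_op (op_zero :: 'a::hs_hilbert \<Rightarrow> 'a)"
  unfolding bounded_op_def op_zero_def by (auto intro!: exI[of _ 0] simp: hs_norm_def)

lemma bounded_op_add:
  assumes "bounded_op A" "bounded_op (B::'a::hs_hilbert \<Rightarrow> 'a)"
  shows "bounded_op (op_add A B)"
proof -
  from assms obtain K1 K2 where K1: "\<And>x. hs_norm (A x) \<le> K1 * hs_norm x"
    and K2: "\<And>x. hs_norm (B x) \<le> K2 * hs_norm x" unfolding bounded_op_def by blast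
  have "hs_norm (A x + B x) \<le> sqrt (2 * K1\<^sup>2 + 2 * K2\<^sup>2) * hs_norm x" for x
  proof -
    have a: "(hs_norm (A x))\<^sup>2 \<le> (K1 * hs_norm x)\<^sup>2"
      using K1[of x] hs_norm_nonneg[of "A x"] by (intro power_mono) auto
    have b: "(hs_norm (B x))\<^sup>2 \<le> (K2 * hs_norm x)\<^sup>2"
      using K2[of x] hs_norm_nonneg[of "B x"] by (intro power_mono) auto
    have "(hs_norm (A x + B x))\<^sup>2 \<le> (2 * K1\<^sup>2 + 2 * K2\<^sup>2) * (hs_norm x)\<^sup>2"
      using parallelogram_le[of "A x" "B x"] a b by (simp add: power_mult_distrib algebra_simps)
    then have "sqrt ((hs_norm (A x + B x))\<^sup>2) \<le> sqrt ((2 * K1\<^sup>2 + 2 * K2\<^sup>2) * (hs_norm x)\<^sup>2)"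
      using real_sqrt_le_mono by blast
    then show ?thesis using hs_norm_nonneg[of x] hs_norm_nonneg[of "A x + B x"]
      by (simp add: real_sqrt_mult)
  qed
  then show ?thesis using assms unfolding bounded_op_def op_add_def
    by (auto simp: hs_scale_add_right algebra_simps intro!: exI[of _ "sqrt (2 * K1\<^sup>2 + 2 * K2\<^sup>2)"])
qed

lemma bounded_op_scale:
  assumes "bounded_op (A::'a::hs_hilbert \<Rightarrow> 'a)"
  shows "bounded_op (op_scale c A)"
proof -
  from assms obtain K where K: "\<And>x. hs_norm (A x) \<le> K * hs_norm x" unfolding bounded_op_def by blast
  have "hs_norm (hs_scale c (A x)) \<le> (cmod c * K) * hs_norm x" for x
    using K[of x] by (simp add: hs_norm_scale mult_left_mono mult.assoc)
  then show ?thesis using assms unfolding bounded_op_def op_scale_def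
    by (auto simp: hs_scale_add_right hs_scale_scale mult.commute intro!: exI[of _ "cmod c * K"])
qed

lemma commutant_closed:
  assumes S: "\<forall>C\<in>S. bounded_op C"
  shows "op_zero \<in> commutant (S::('a::hs_hilbert \<Rightarrow> 'a) set)"
    and "A \<in> commutant S \<Longrightarrow> B \<in> commutant S \<Longrightarrow> op_add A B \<in> commutant S"
    and "A \<in> commutant S \<Longrightarrow> op_scale c A \<in> commutant S"
proof -
  have add: "C (x + y) = C x + C y" "C (hs_scale c x) = hs_scale c (C x)" if "C \<in> S" for C x y c
    using S that unfolding bounded_op_def by auto
  have "C 0 = 0" if "C \<in> S" for C using add(1)[OF that, of 0 0] by simp
  then show "op_zero \<in> commutant S" unfolding commutant_def
    using bounded_op_zero by (auto simp: op_zero_def)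
  show "A \<in> commutant S \<Longrightarrow> B \<in> commutant S \<Longrightarrow> op_add A B \<in> commutant S"
    unfolding commutant_def using add bounded_op_add[unfolded op_add_def]
    by (auto simp: op_add_def fun_eq_iff)
  show "A \<in> commutant S \<Longrightarrow> op_scale c A \<in> commutant S"
    unfolding commutant_def using add bounded_op_scale[unfolded op_scale_def]
    by (auto simp: op_scale_def fun_eq_iff)
qed

lemma op_neg_scale: "op_neg A = op_scale (-1) (A::'a::hs_hilbert \<Rightarrow> 'a)"
  by (simp add: op_neg_def op_scale_def hs_scale_minus_one)

lemma vna_closed:
  assumes "von_neumann_algebra (M::('a::hs_hilbert \<Rightarrow> 'a) set)"
  shows "op_zero \<in> M" "A \<in> M \<Longrightarrow> B \<in> M \<Longrightarrow> op_add A B \<in> M"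
    "A \<in> M \<Longrightarrow> op_scale c A \<in> M" "A \<in> M \<Longrightarrow> op_neg A \<in> M"
proof -
  have S: "\<forall>C\<in>commutant M. bounded_op C" unfolding commutant_def by auto
  have M: "M = commutant (commutant M)" using assms unfolding von_neumann_algebra_def by auto
  show "op_zero \<in> M" using commutant_closed(1)[OF S] M by simp
  show "A \<in> M \<Longrightarrow> B \<in> M \<Longrightarrow> op_add A B \<in> M" using commutant_closed(2)[OF S] M by blast
  show sc: "A \<in> M \<Longrightarrow> op_scale c A \<in> M" for c using commutant_closed(3)[OF S] M by blast
  show "A \<in> M \<Longrightarrow> op_neg A \<in> M" using sc[of "-1"] by (simp add: op_neg_scale)
qed



lemma haus_nonneg:
  fixes d :: "'x \<Rightarrow> 'y \<Rightarrow> real"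
  assumes "X \<noteq> {}" "\<And>x y. x \<in> X \<Longrightarrow> y \<in> Y \<Longrightarrow> 0 \<le> d x y"
  shows "0 \<le> max (SUP x\<in>X. INF y\<in>Y. ereal (d x y)) (SUP y\<in>Y. INF x\<in>X. ereal (d x y))"
proof -
  obtain x0 where "x0 \<in> X" using assms(1) by blast
  have "0 \<le> (INF y\<in>Y. ereal (d x0 y))" using assms(2) \<open>x0 \<in> X\<close> by (auto intro: INF_greatest)
  also have "\<dots> \<le> (SUP x\<in>X. INF y\<in>Y. ereal (d x y))" using \<open>x0 \<in> X\<close> by (rule SUP_upper)
  finally show ?thesis by (rule max.coboundedI1)
qed

lemma INF_nonneg_ereal: "(\<And>y. y \<in> Y \<Longrightarrow> 0 \<le> f y) \<Longrightarrow> 0 \<le> (INF y\<in>Y. ereal (f y))"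
  by (auto intro: INF_greatest)

lemma haus_tri:
  fixes d12 :: "'x \<Rightarrow> 'y \<Rightarrow> real" and d23 :: "'y \<Rightarrow> 'z \<Rightarrow> real" and d13 :: "'x \<Rightarrow> 'z \<Rightarrow> real"
  assumes ne: "X \<noteq> {}" "Y \<noteq> {}" "Z \<noteq> {}"
    and nn12: "\<And>x y. x \<in> X \<Longrightarrow> y \<in> Y \<Longrightarrow> 0 \<le> d12 x y"
    and nn23: "\<And>y z. y \<in> Y \<Longrightarrow> z \<in> Z \<Longrightarrow> 0 \<le> d23 y z"
    and tri: "\<And>x y z. x \<in> X \<Longrightarrow> y \<in> Y \<Longrightarrow> z \<in> Z \<Longrightarrow> d13 x z \<le> d12 x y + d23 y z"
  shows "max (SUP x\<in>X. INF z\<in>Z. ereal (d13 x z)) (SUP z\<in>Z. INF x\<in>X. ereal (d13 x z))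
    \<le> max (SUP x\<in>X. INF y\<in>Y. ereal (d12 x y)) (SUP y\<in>Y. INF x\<in>X. ereal (d12 x y))
      + max (SUP y\<in>Y. INF z\<in>Z. ereal (d23 y z)) (SUP z\<in>Z. INF y\<in>Y. ereal (d23 y z))"
proof -
  define A where "A = (SUP x\<in>X. INF y\<in>Y. ereal (d12 x y))"
  define A' where "A' = (SUP y\<in>Y. INF x\<in>X. ereal (d12 x y))"
  define B where "B = (SUP y\<in>Y. INF z\<in>Z. ereal (d23 y z))"
  define B' where "B' = (SUP z\<in>Z. INF y\<in>Y. ereal (d23 y z))"
  obtain y0 where y0: "y0 \<in> Y" using ne by blast
  obtain z0 where z0: "z0 \<in> Z" using ne by blast
  have B0: "0 \<le> B" unfolding B_def
    by (rule order_trans[OF INF_nonneg_ereal SUP_upper[OF y0]]) (use nn23 y0 in auto)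
  have A'0: "0 \<le> A'" unfolding A'_def
    by (rule order_trans[OF INF_nonneg_ereal SUP_upper[OF y0]]) (use nn12 y0 in auto)
  have p1: "(INF z\<in>Z. ereal (d13 x z)) \<le> A + B" if x: "x \<in> X" for x
  proof -
    have "(INF z\<in>Z. ereal (d13 x z)) \<le> ereal (d12 x y) + B" if y: "y \<in> Y" for y
    proof -
      have "(INF z\<in>Z. ereal (d13 x z)) \<le> (INF z\<in>Z. ereal (d12 x y) + ereal (d23 y z))"
        using tri x y by (intro INF_mono) (metis order_refl plus_ereal.simps(1) ereal_less_eq(3))
      also have "\<dots> = ereal (d12 x y) + (INF z\<in>Z. ereal (d23 y z))"
        using ne nn23 y by (intro INF_ereal_add_right) auto
      also have "\<dots> \<le> ereal (d12 x y) + B"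
        unfolding B_def using y by (intro add_mono order_refl SUP_upper)
      finally show ?thesis .
    qed
    then have "(INF z\<in>Z. ereal (d13 x z)) \<le> (INF y\<in>Y. ereal (d12 x y) + B)"
      by (intro INF_greatest)
    also have "\<dots> = (INF y\<in>Y. ereal (d12 x y)) + B"
      using ne nn12 x B0 by (intro INF_ereal_add_left) auto
    also have "\<dots> \<le> A + B" unfolding A_def using x by (intro add_mono order_refl SUP_upper)
    finally show ?thesis .
  qed
  have p2: "(INF x\<in>X. ereal (d13 x z)) \<le> A' + B'" if z: "z \<in> Z" for z
  proof -
    have "(INF x\<in>X. ereal (d13 x z)) \<le> A' + ereal (d23 y z)" if y: "y \<in> Y" for y
    proof -
      have "(INF x\<in>X. ereal (d13 x z)) \<le> (INF x\<in>X. ereal (d12 x y) + ereal (d23 y z))"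
        using tri z y by (intro INF_mono) (metis order_refl plus_ereal.simps(1) ereal_less_eq(3))
      also have "\<dots> = (INF x\<in>X. ereal (d12 x y)) + ereal (d23 y z)"
        using ne nn12 y by (intro INF_ereal_add_left) auto
      also have "\<dots> \<le> A' + ereal (d23 y z)"
        unfolding A'_def using y by (intro add_mono order_refl SUP_upper)
      finally show ?thesis .
    qed
    then have "(INF x\<in>X. ereal (d13 x z)) \<le> (INF y\<in>Y. A' + ereal (d23 y z))"
      by (intro INF_greatest)
    also have "\<dots> = A' + (INF y\<in>Y. ereal (d23 y z))"
      using ne nn23 z A'0 by (intro INF_ereal_add_right) auto
    also have "\<dots> \<le> A' + B'" unfolding B'_def using z by (intro add_mono order_refl SUP_upper)
    finally show ?thesis .
  qed
  have "(SUP x\<in>X. INF z\<in>Z. ereal (d13 x z)) \<le> A + B" using p1 by (intro SUP_least)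
  also have "\<dots> \<le> max A A' + max B B'" by (intro add_mono) auto
  finally have 1: "(SUP x\<in>X. INF z\<in>Z. ereal (d13 x z)) \<le> max A A' + max B B'" .
  have "(SUP z\<in>Z. INF x\<in>X. ereal (d13 x z)) \<le> A' + B'" using p2 by (intro SUP_least)
  also have "\<dots> \<le> max A A' + max B B'" by (intro add_mono) auto
  finally have 2: "(SUP z\<in>Z. INF x\<in>X. ereal (d13 x z)) \<le> max A A' + max B B'" .
  show ?thesis using 1 2 unfolding A_def A'_def B_def B'_def by simp
qed

lemma INF_add_bound:
  fixes f :: "'a \<Rightarrow> ereal" and g :: "'b \<Rightarrow> ereal"
  assumes "\<And>a b. a \<in> A \<Longrightarrow> b \<in> B \<Longrightarrow> c \<le> f a + g b"
    and "\<And>a. a \<in> A \<Longrightarrow> 0 \<le> f a" "\<And>b. b \<in> B \<Longrightarrow> 0 \<le> g b"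
  shows "c \<le> (INF a\<in>A. f a) + (INF b\<in>B. g b)"
proof (cases "A = {} \<or> B = {}")
  case True
  have "0 \<le> (INF a\<in>A. f a)" "0 \<le> (INF b\<in>B. g b)" using assms(2,3) by (auto intro: INF_greatest)
  then show ?thesis using True by (auto simp: top_ereal_def)
next
  case False
  have g0: "0 \<le> (INF b\<in>B. g b)" using assms(3) by (auto intro: INF_greatest)
  have "c \<le> f a + (INF b\<in>B. g b)" if a: "a \<in> A" for a
  proof -
    have "c \<le> (INF b\<in>B. f a + g b)" using assms(1) a by (auto intro: INF_greatest)
    also have "\<dots> = f a + (INF b\<in>B. g b)"
      using False assms(2,3) a by (intro INF_ereal_add_right) auto
    finally show ?thesis .
  qed
  then have "c \<le> (INF a\<in>A. f a + (INF b\<in>B. g b))" by (auto intro: INF_greatest)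
  also have "\<dots> = (INF a\<in>A. f a) + (INF b\<in>B. g b)"
    using False assms(2) g0 by (intro INF_ereal_add_left) auto
  finally show ?thesis .
qed



lemma op_simps:
  "op_add x op_zero = x" "op_add op_zero x = x" "op_add (op_neg y) y = op_zero"
  "op_neg op_zero = op_zero" "op_scale 0 x = op_zero"
  "op_neg (op_add y1 y2) = op_add (op_neg y1) (op_neg y2)"
  "op_neg (op_scale c y) = op_scale c (op_neg y)"
  "c \<noteq> 0 \<Longrightarrow> op_scale (inverse c) (op_scale c x) = x"
  "op_scale (-1) (op_neg (y::'a::hs_hilbert \<Rightarrow> 'a)) = y"
  by (auto simp: op_add_def op_zero_def op_neg_def op_scale_def fun_eq_iff hs_scale_minus_right
      hs_scale_scale hs_scale_one hs_scale_minus_one)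

lemma Lset_basic:
  assumes L: "L \<in> Lset M LM N LN" and vM: "von_neumann_algebra M" and vN: "von_neumann_algebra N"
  shows "L (op_zero, op_zero) = 0"
    and "x \<in> M \<Longrightarrow> y \<in> N \<Longrightarrow> 0 \<le> L (x, y)"
    and "x \<in> M \<Longrightarrow> y \<in> N \<Longrightarrow> L (op_neg x, op_neg y) = L (x, y)"
proof -
  have sub: "\<And>p q. p \<in> M \<times> N \<Longrightarrow> q \<in> M \<times> N \<Longrightarrow> L (op_add (fst p) (fst q), op_add (snd p) (snd q)) \<le> L p + L q"
    and hom: "\<And>c p. p \<in> M \<times> N \<Longrightarrow> L (op_scale c (fst p), op_scale c (snd p)) = cmod c * L p"
    using L unfolding Lset_def by auto
  show z: "L (op_zero, op_zero) = 0"
    using hom[of "(op_zero, op_zero)" 0] vna_closed(1)[OF vM] vna_closed(1)[OF vN] by (simp add: op_simps)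
  show ng: "L (op_neg x, op_neg y) = L (x, y)" if "x \<in> M" "y \<in> N" for x y
    using hom[of "(x,y)" "-1"] that by (simp add: op_neg_scale)
  show "0 \<le> L (x, y)" if "x \<in> M" "y \<in> N" for x y
  proof -
    have "L (op_add (op_neg x) x, op_add (op_neg y) y) \<le> L (op_neg x, op_neg y) + L (x, y)"
      using sub[of "(op_neg x, op_neg y)" "(x,y)"] that vna_closed(4)[OF vM] vna_closed(4)[OF vN] by auto
    then show ?thesis using z ng[OF that] by (simp add: op_simps)
  qed
qed

definition L13 :: "((('a::hs_hilbert \<Rightarrow> 'a) \<times> ('b::hs_hilbert \<Rightarrow> 'b)) \<Rightarrow> real)
   \<Rightarrow> ((('b \<Rightarrow> 'b) \<times> ('c::hs_hilbert \<Rightarrow> 'c)) \<Rightarrow> real) \<Rightarrow> ('b \<Rightarrow> 'b) set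
   \<Rightarrow> (('a \<Rightarrow> 'a) \<times> ('c \<Rightarrow> 'c)) \<Rightarrow> real" where
  "L13 L12 L23 M2 p = (INF y\<in>M2. L12 (fst p, op_neg y) + L23 (y, snd p))"

context
  fixes M1 :: "('a::hs_hilbert \<Rightarrow> 'a) set" and L1 :: "('a \<Rightarrow> 'a) \<Rightarrow> real"
    and M2 :: "('b::hs_hilbert \<Rightarrow> 'b) set" and L2 :: "('b \<Rightarrow> 'b) \<Rightarrow> real"
    and M3 :: "('c::hs_hilbert \<Rightarrow> 'c) set" and L3 :: "('c \<Rightarrow> 'c) \<Rightarrow> real"
    and L12 L23
  assumes v1: "von_neumann_algebra M1" and v2: "von_neumann_algebra M2"
    and v3: "von_neumann_algebra M3"
    and L12: "L12 \<in> Lset M1 L1 M2 L2" and L23: "L23 \<in> Lset M2 L2 M3 L3"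
begin

private abbreviation "LL \<equiv> L13 L12 L23 M2"

private lemma sub12: "p \<in> M1 \<times> M2 \<Longrightarrow> q \<in> M1 \<times> M2 \<Longrightarrow> L12 (op_add (fst p) (fst q), op_add (snd p) (snd q)) \<le> L12 p + L12 q"
  and hom12: "p \<in> M1 \<times> M2 \<Longrightarrow> L12 (op_scale c (fst p), op_scale c (snd p)) = cmod c * L12 p"
  and lft12: "x \<in> M1 \<Longrightarrow> L12 (x, op_zero) = L1 x"
  and rgt12: "y \<in> M2 \<Longrightarrow> L12 (op_zero, y) = L2 y"
  using L12 unfolding Lset_def by auto

private lemma sub23: "p \<in> M2 \<times> M3 \<Longrightarrow> q \<in> M2 \<times> M3 \<Longrightarrow> L23 (op_add (fst p) (fst q), op_add (snd p) (snd q)) \<le> L23 p + L23 q"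
  and hom23: "p \<in> M2 \<times> M3 \<Longrightarrow> L23 (op_scale c (fst p), op_scale c (snd p)) = cmod c * L23 p"
  and lft23: "y \<in> M2 \<Longrightarrow> L23 (y, op_zero) = L2 y"
  and rgt23: "z \<in> M3 \<Longrightarrow> L23 (op_zero, z) = L3 z"
  using L23 unfolding Lset_def by auto

private lemma nn12: "x \<in> M1 \<Longrightarrow> y \<in> M2 \<Longrightarrow> 0 \<le> L12 (x, y)"
  using Lset_basic(2)[OF L12 v1 v2] .
private lemma nn23: "y \<in> M2 \<Longrightarrow> z \<in> M3 \<Longrightarrow> 0 \<le> L23 (y, z)"
  using Lset_basic(2)[OF L23 v2 v3] .

lemma LL_lower:
  assumes "x \<in> M1" "y \<in> M2" "z \<in> M3"
  shows "LL (x, z) \<le> L12 (x, op_neg y) + L23 (y, z)"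
  unfolding L13_def fst_conv snd_conv
proof (rule cINF_lower)
  show "bdd_below ((\<lambda>y. L12 (x, op_neg y) + L23 (y, z)) ` M2)"
    using assms nn12 nn23 vna_closed(4)[OF v2] by (intro bdd_belowI2[of _ 0]) (simp add: add_nonneg_nonneg)
qed (use assms in auto)

private lemma LL_greatest:
  assumes "\<And>y. y \<in> M2 \<Longrightarrow> r \<le> L12 (x, op_neg y) + L23 (y, z)"
  shows "r \<le> LL (x, z)"
  unfolding L13_def fst_conv snd_conv
  using vna_closed(1)[OF v2] assms by (intro cINF_greatest) auto

lemma LL_left: "x \<in> M1 \<Longrightarrow> LL (x, op_zero) = L1 x"
proof (rule antisym)
  assume x: "x \<in> M1"
  show "LL (x, op_zero) \<le> L1 x"
    using LL_lower[OF x vna_closed(1)[OF v2] vna_closed(1)[OF v3]] x vna_closed(1)[OF v2]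
      Lset_basic(1)[OF L23 v2 v3] lft12 by (simp add: op_simps)
  show "L1 x \<le> LL (x, op_zero)"
  proof (rule LL_greatest)
    fix y assume y: "y \<in> M2"
    have "L12 (op_add x op_zero, op_add (op_neg y) y) \<le> L12 (x, op_neg y) + L12 (op_zero, y)"
      using sub12[of "(x, op_neg y)" "(op_zero, y)"] x y vna_closed(1)[OF v1] vna_closed(4)[OF v2] by auto
    then show "L1 x \<le> L12 (x, op_neg y) + L23 (y, op_zero)"
      using x y lft12 rgt12 lft23 by (simp add: op_simps)
  qed
qed

lemma LL_right: "z \<in> M3 \<Longrightarrow> LL (op_zero, z) = L3 z"
proof (rule antisym)
  assume z: "z \<in> M3"
  show "LL (op_zero, z) \<le> L3 z"
    using LL_lower[OF vna_closed(1)[OF v1] vna_closed(1)[OF v2] z] z vna_closed(1)[OF v2]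
      Lset_basic(1)[OF L12 v1 v2] rgt23 by (simp add: op_simps)
  show "L3 z \<le> LL (op_zero, z)"
  proof (rule LL_greatest)
    fix y assume y: "y \<in> M2"
    have "L23 (op_add (op_neg y) y, op_add op_zero z) \<le> L23 (op_neg y, op_zero) + L23 (y, z)"
      using sub23[of "(op_neg y, op_zero)" "(y, z)"] z y vna_closed(1)[OF v3] vna_closed(4)[OF v2] by auto
    then show "L3 z \<le> L12 (op_zero, op_neg y) + L23 (y, z)"
      using z y rgt12 rgt23 lft23 vna_closed(4)[OF v2] by (simp add: op_simps)
  qed
qed

lemma LL_sub:
  assumes x: "x1 \<in> M1" "x2 \<in> M1" and z: "z1 \<in> M3" "z2 \<in> M3"
  shows "LL (op_add x1 x2, op_add z1 z2) \<le> LL (x1, z1) + LL (x2, z2)"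
proof -
  have key: "LL (op_add x1 x2, op_add z1 z2) \<le> (L12 (x1, op_neg y1) + L23 (y1, z1)) + (L12 (x2, op_neg y2) + L23 (y2, z2))"
    if y: "y1 \<in> M2" "y2 \<in> M2" for y1 y2
  proof -
    have "LL (op_add x1 x2, op_add z1 z2) \<le> L12 (op_add x1 x2, op_neg (op_add y1 y2)) + L23 (op_add y1 y2, op_add z1 z2)"
      by (rule LL_lower[OF vna_closed(2)[OF v1 x] vna_closed(2)[OF v2 y] vna_closed(2)[OF v3 z]])
    moreover have "L12 (op_add x1 x2, op_neg (op_add y1 y2)) \<le> L12 (x1, op_neg y1) + L12 (x2, op_neg y2)"
    proof -
      have "(x1, op_neg y1) \<in> M1 \<times> M2" "(x2, op_neg y2) \<in> M1 \<times> M2"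
        using x vna_closed(4)[OF v2 y(1)] vna_closed(4)[OF v2 y(2)] by auto
      from sub12[OF this] show ?thesis unfolding op_simps(6) by simp
    qed
    moreover have "L23 (op_add y1 y2, op_add z1 z2) \<le> L23 (y1, z1) + L23 (y2, z2)"
    proof -
      have "(y1, z1) \<in> M2 \<times> M3" "(y2, z2) \<in> M2 \<times> M3" using y z by auto
      from sub23[OF this] show ?thesis by simp
    qed
    ultimately show ?thesis by linarith
  qed
  have "LL (op_add x1 x2, op_add z1 z2) - LL (x1, z1) \<le> L12 (x2, op_neg y2) + L23 (y2, z2)" if y2: "y2 \<in> M2" for y2
  proof -
    have "LL (op_add x1 x2, op_add z1 z2) - (L12 (x2, op_neg y2) + L23 (y2, z2)) \<le> LL (x1, z1)"
    proof (rule LL_greatest)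
      fix y1 assume y1: "y1 \<in> M2"
      show "LL (op_add x1 x2, op_add z1 z2) - (L12 (x2, op_neg y2) + L23 (y2, z2)) \<le> L12 (x1, op_neg y1) + L23 (y1, z1)"
        using key[OF y1 y2] by linarith
    qed
    then show ?thesis by linarith
  qed
  then have "LL (op_add x1 x2, op_add z1 z2) - LL (x1, z1) \<le> LL (x2, z2)" by (rule LL_greatest)
  then show ?thesis by linarith
qed

private lemma LL_hom_le:
  assumes c: "c \<noteq> 0" and x: "x \<in> M1" and z: "z \<in> M3"
  shows "LL (op_scale c x, op_scale c z) \<le> cmod c * LL (x, z)"
proof -
  have cp: "cmod c > 0" using c by simp
  have "LL (op_scale c x, op_scale c z) / cmod c \<le> LL (x, z)"
  proof (rule LL_greatest)
    fix y assume y: "y \<in> M2"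
    have "LL (op_scale c x, op_scale c z) \<le> L12 (op_scale c x, op_neg (op_scale c y)) + L23 (op_scale c y, op_scale c z)"
      by (rule LL_lower[OF vna_closed(3)[OF v1 x] vna_closed(3)[OF v2 y] vna_closed(3)[OF v3 z]])
    also have "\<dots> = cmod c * (L12 (x, op_neg y) + L23 (y, z))"
    proof -
      have n: "op_neg y \<in> M2" using vna_closed(4)[OF v2 y] .
      have "L12 (op_scale c x, op_scale c (op_neg y)) = cmod c * L12 (x, op_neg y)"
        using hom12[of "(x, op_neg y)" c] x n by simp
      moreover have "L23 (op_scale c y, op_scale c z) = cmod c * L23 (y, z)"
        using hom23[of "(y, z)" c] y z by simp
      moreover have "op_neg (op_scale c y) = op_scale c (op_neg y)" by (rule op_simps(7))
      ultimately show ?thesis by (simp add: distrib_left)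
    qed
    finally have "LL (op_scale c x, op_scale c z) \<le> cmod c * (L12 (x, op_neg y) + L23 (y, z))" .
    then show "LL (op_scale c x, op_scale c z) / cmod c \<le> L12 (x, op_neg y) + L23 (y, z)"
      using cp by (simp add: divide_le_eq mult_ac)
  qed
  then show ?thesis using cp by (simp add: divide_le_eq mult_ac)
qed

lemma LL_hom:
  assumes x: "x \<in> M1" and z: "z \<in> M3"
  shows "LL (op_scale c x, op_scale c z) = cmod c * LL (x, z)"
proof (cases "c = 0")
  case True
  have e1: "op_scale c x = op_zero" "op_scale c z = op_zero" using True op_simps(5) by auto
  have "LL (op_zero, op_zero) = L3 op_zero" by (rule LL_right[OF vna_closed(1)[OF v3]])
  also have "\<dots> = L23 (op_zero, op_zero)" by (rule rgt23[OF vna_closed(1)[OF v3], symmetric])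
  also have "\<dots> = 0" by (rule Lset_basic(1)[OF L23 v2 v3])
  finally show ?thesis using True e1 by simp
next
  case False
  have ix: "op_scale (inverse c) (op_scale c x) = x" and iz: "op_scale (inverse c) (op_scale c z) = z"
    using op_simps(8)[OF False] by auto
  have i0: "inverse c \<noteq> 0" using False by simp
  have le: "LL (op_scale (inverse c) (op_scale c x), op_scale (inverse c) (op_scale c z))
      \<le> cmod (inverse c) * LL (op_scale c x, op_scale c z)"
    by (rule LL_hom_le[OF i0 vna_closed(3)[OF v1 x] vna_closed(3)[OF v3 z]])
  then have le2: "LL (x, z) \<le> cmod (inverse c) * LL (op_scale c x, op_scale c z)"
    unfolding ix iz .
  have cp: "0 < cmod c" using False by simp
  have "cmod c * LL (x, z) \<le> cmod c * (cmod (inverse c) * LL (op_scale c x, op_scale c z))"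
    using le2 cp by (intro mult_left_mono) auto
  also have "cmod c * (cmod (inverse c) * LL (op_scale c x, op_scale c z)) = LL (op_scale c x, op_scale c z)"
    using cp by (simp add: norm_inverse mult.assoc[symmetric])
  finally have "cmod c * LL (x, z) \<le> LL (op_scale c x, op_scale c z)" .
  then show ?thesis using LL_hom_le[OF False x z] by linarith
qed

lemma LL_Lset: "LL \<in> Lset M1 L1 M3 L3"
  unfolding Lset_def mem_Collect_eq
proof (intro conjI ballI allI)
  fix p q assume "p \<in> M1 \<times> M3" "q \<in> M1 \<times> M3"
  then show "LL (op_add (fst p) (fst q), op_add (snd p) (snd q)) \<le> LL p + LL q"
    using LL_sub[of "fst p" "fst q" "snd p" "snd q"] by (cases p, cases q) simp
next
  fix c p assume "p \<in> M1 \<times> M3"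
  then show "LL (op_scale c (fst p), op_scale c (snd p)) = cmod c * LL p"
    using LL_hom[of "fst p" "snd p" c] by (cases p) simp
next
  fix x assume "x \<in> M1" then show "LL (x, op_zero) = L1 x" by (rule LL_left)
next
  fix z assume "z \<in> M3" then show "LL (op_zero, z) = L3 z" by (rule LL_right)
qed

end



lemma Lmat_set: "{L (x i j, y i j) | i j. True} = (\<lambda>(i,j). L (x i j, y i j)) ` UNIV"
  by auto

lemma Lmat_ge: "L (x i j, y i j) \<le> Lmat L x y"
  unfolding Lmat_def Lmat_set by (rule Max_ge) auto

lemma Lmat_le: "(\<And>i j. L (x i j, y i j) \<le> r) \<Longrightarrow> Lmat L x y \<le> r"
  unfolding Lmat_def Lmat_set by (subst Max_le_iff) auto

lemma XM_zero:
  assumes "op_zero \<in> M" shows "(\<lambda>i j. op_zero) \<in> XM M"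
  using assms unfolding XM_def mat_pos_def mat_contr_def
  by (auto simp: op_zero_def hs_norm_def intro!: sum_nonneg)

lemma XM_ne: "von_neumann_algebra M \<Longrightarrow> XM M \<noteq> {}"
  using XM_zero vna_closed(1) by blast

lemma Lmat_nonneg:
  assumes "L \<in> Lset M LM N LN" "von_neumann_algebra M" "von_neumann_algebra N"
    "x \<in> XM M" "y \<in> XM N"
  shows "0 \<le> Lmat L x (mat_neg y)"
proof -
  have "0 \<le> L (x True True, mat_neg y True True)"
    using assms Lset_basic(2)[OF assms(1-3)] vna_closed(4)[OF assms(3)]
    unfolding XM_def mat_neg_def by auto
  also have "\<dots> \<le> Lmat L x (mat_neg y)" by (rule Lmat_ge)
  finally show ?thesis .
qed

lemma distH_nonneg:
  assumes "L \<in> Lset M LM N LN" "von_neumann_algebra M" "von_neumann_algebra N"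
  shows "0 \<le> distH L M N"
  unfolding distH_def
  by (rule haus_nonneg[OF XM_ne[OF assms(2)]]) (rule Lmat_nonneg[OF assms])

lemma distH_tri:
  assumes v1: "von_neumann_algebra M1" and v2: "von_neumann_algebra M2"
    and v3: "von_neumann_algebra M3"
    and L12: "L12 \<in> Lset M1 L1 M2 L2" and L23: "L23 \<in> Lset M2 L2 M3 L3"
  shows "distH (L13 L12 L23 M2) M1 M3 \<le> distH L12 M1 M2 + distH L23 M2 M3"
  unfolding distH_def
proof (rule haus_tri[OF XM_ne[OF v1] XM_ne[OF v2] XM_ne[OF v3]])
  fix x y assume "x \<in> XM M1" "y \<in> XM M2"
  then show "0 \<le> Lmat L12 x (mat_neg y)" by (rule Lmat_nonneg[OF L12 v1 v2])
next
  fix y z assume "y \<in> XM M2" "z \<in> XM M3"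
  then show "0 \<le> Lmat L23 y (mat_neg z)" by (rule Lmat_nonneg[OF L23 v2 v3])
next
  fix x y z assume x: "x \<in> XM M1" and y: "y \<in> XM M2" and z: "z \<in> XM M3"
  show "Lmat (L13 L12 L23 M2) x (mat_neg z) \<le> Lmat L12 x (mat_neg y) + Lmat L23 y (mat_neg z)"
  proof (rule Lmat_le)
    fix i j
    have "L13 L12 L23 M2 (x i j, mat_neg z i j) \<le> L12 (x i j, op_neg (y i j)) + L23 (y i j, mat_neg z i j)"
      using LL_lower[OF v1 v2 v3 L12 L23] x y z vna_closed(4)[OF v3]
      unfolding XM_def mat_neg_def by auto
    also have "\<dots> \<le> Lmat L12 x (mat_neg y) + Lmat L23 y (mat_neg z)"
      using Lmat_ge[where L=L12 and x=x and y="mat_neg y" and i=i and j=j] Lmat_ge[where L=L23 and x=y and y="mat_neg z" and i=i and j=j]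
      unfolding mat_neg_def by simp
    finally show "L13 L12 L23 M2 (x i j, mat_neg z i j) \<le> Lmat L12 x (mat_neg y) + Lmat L23 y (mat_neg z)" .
  qed
qed

theorem mainTheorem5:
  fixes M1 :: "('a::hs_hilbert \<Rightarrow> 'a) set" and L1 :: "('a \<Rightarrow> 'a) \<Rightarrow> real"
    and M2 :: "('b::hs_hilbert \<Rightarrow> 'b) set" and L2 :: "('b \<Rightarrow> 'b) \<Rightarrow> real"
    and M3 :: "('c::hs_hilbert \<Rightarrow> 'c) set" and L3 :: "('c \<Rightarrow> 'c) \<Rightarrow> real"
  assumes "LvNA M1 L1" and "LvNA M2 L2" and "LvNA M3 L3"
  shows "dist_qGH M1 L1 M3 L3 \<le> dist_qGH M1 L1 M2 L2 + dist_qGH M2 L2 M3 L3"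
proof -
  have v1: "von_neumann_algebra M1" and v2: "von_neumann_algebra M2"
    and v3: "von_neumann_algebra M3" using assms unfolding LvNA_def by auto
  show ?thesis
    unfolding dist_qGH_def
  proof (rule INF_add_bound)
    fix L12 L23 assume L12: "L12 \<in> Lset M1 L1 M2 L2" and L23: "L23 \<in> Lset M2 L2 M3 L3"
    have "(INF L\<in>Lset M1 L1 M3 L3. distH L M1 M3) \<le> distH (L13 L12 L23 M2) M1 M3"
      by (rule INF_lower) (rule LL_Lset[OF v1 v2 v3 L12 L23])
    also have "\<dots> \<le> distH L12 M1 M2 + distH L23 M2 M3"
      by (rule distH_tri[OF v1 v2 v3 L12 L23])
    finally show "(INF L\<in>Lset M1 L1 M3 L3. distH L M1 M3) \<le> distH L12 M1 M2 + distH L23 M2 M3" .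
  next
    fix L assume "L \<in> Lset M1 L1 M2 L2" then show "0 \<le> distH L M1 M2"
      using distH_nonneg v1 v2 by blast
  next
    fix L assume "L \<in> Lset M2 L2 M3 L3" then show "0 \<le> distH L M2 M3"
      using distH_nonneg v2 v3 by blast
  qed
qed

end
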